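(* Let $R$ be a type $(1,1)$ tensor on $E$ with $R(dt)=0$ and $\widetilde{R}$ its complete lift to $J^1\tau^*$. Then $\mathcal{L}_{\widetilde{X}}\widetilde{R}=\widetilde{\mathcal{L}_XR}$ for all $X\in\mathcal{X}^V(E)\cup\mathcal{X}^t(E)$, and $\mathcal{L}_{\alpha^v}\widetilde{R}=\big(-R\lrcorner_2\,d\alpha+d(R(\alpha))\big)^v$ for all 1-forms $\alpha$ on $E$.
   Context: Setting: $\tau:E\to\mathbb{R}$, $\dim E=n+1$, adapted coordinates $(t,q^i)$, allowed changes $t\mapsto t$, $q\mapsto Q(t,q)$; $J^1\tau^*=T^*E/\langle dt\rangle$, projection $\pi$, coordinates $(t,q^i,p_i)$ (class of $p_idq^i$). $\mathcal{X}^V(E)$: vector fields with $\langle X,dt\rangle=0$; $\mathcal{X}^t(E)$: vector fields with $\langle X,dt\rangle=1$. $(1,1)$ tensors act on 1-forms by $\langle R(X),\alpha\rangle=\langle X,R(\alpha)\rangle$. Note $(\mathcal{L}_XR)(dt)=0$ for $X\in\mathcal{X}^V(E)\cup\mathcal{X}^t(E)$. Vertical lift of a 1-form $\alpha=\alpha_0dt+\alpha_idq^i$: $\alpha^v=\alpha_i\partial_{p_i}$. Complete lift of $X=\varepsilon\partial_t+X^i\partial_{q^i}$, $\varepsilon\in\{0,1\}$: $\widetilde{X}=\varepsilon\partial_t+X^i\partial_{q^i}-p_j\frac{\partial X^j}{\partial q^i}\partial_{p_i}$. For a $(1,1)$ tensor $S$ on $E$ with $S(dt)=0$, $S^v=p_iS^i_j\partial_{p_j}$.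 Complete lift of $S=S^i_j\partial_{q^i}\otimes dq^j+S^i_0\partial_{q^i}\otimes dt$: the unique $(1,1)$ tensor $\widetilde{S}$ on $J^1\tau^*$ with $\widetilde{S}(\alpha^v)=(S(\alpha))^v$ for all 1-forms $\alpha$ and $\widetilde{S}(\widetilde{X})=\widetilde{S(X)}+(\mathcal{L}_XS)^v$ for all $X\in\mathcal{X}^V(E)\cup\mathcal{X}^t(E)$; in coordinates $\widetilde{S}=S^i_j(\partial_{q^i}\otimes dq^j+\partial_{p_j}\otimes dp_i)+S^i_0\partial_{q^i}\otimes dt+p_i(\frac{\partial S^i_j}{\partial q^k}-\frac{\partial S^i_k}{\partial q^j})\partial_{p_j}\otimes dq^k+p_i(\frac{\partial S^i_k}{\partial t}-\frac{\partial S^i_0}{\partial q^k})\partial_{p_k}\otimes dt$. For a 2-form $\omega$ on $E$, $R\lrcorner_2\,\omega$ denotes the covariant 2-tensor $(X,Y)\mapsto\omega(R(X),Y)$. For a covariant 2-tensor $\omega$ on $E$ (with $i_X\omega:=\omega(X,\cdot)$), its vertical lift $\omega^v$ is the $(1,1)$ tensor on $J^1\tau^*$ defined by $\omega^v(\alpha^v)=0$ for all 1-forms $\alpha$ and $\omega^v(\widetilde{X})=(i_X\omega)^v$ for all $X\in\mathcal{X}^V(E)\cup\mathcal{X}^t(E)$; for a 2-form $\omega=\tfrac12\omega_{ij}dq^i\wedge dq^j+\omega_{0i}dt\wedge dq^i$ this is $\omega^v=\omega_{ij}\partial_{p_j}\otimes dq^i+\omega_{0j}\partial_{p_j}\otimes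 dt$. *)

theory Defs
  imports "HOL-Analysis.Analysis"
begin

text \<open>Coordinate indices on E (adapted coordinates (t, q^i)) and on J^1 tau^*
  (coordinates (t, q^i, p_i)).  Points of E are pairs (t, q) with q :: real^'n,
  points of J^1 tau^* are triples (t, q, p).\<close>

datatype 'n eidx = ET | EQ 'n
datatype 'n jidx = JT | JQ 'n | JP 'n

lemma UNIV_eidx: "(UNIV :: 'n eidx set) = insert ET (range EQ)"
proof (rule set_eqI)
  fix x :: "'n eidx"
  show "x \<in> UNIV \<longleftrightarrow> x \<in> insert ET (range EQ)" by (cases x) simp_all
qed

lemma UNIV_jidx: "(UNIV :: 'n jidx set) = insert JT (range JQ \<union> range JP)"
proof (rule set_eqI)
  fix x :: "'n jidx"
  show "x \<in> UNIV \<longleftrightarrow> x \<in> insert JT (range JQ \<union> range JP)" by (cases x) simp_all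
qed

instance eidx :: (finite) finite
proof
  have "finite (insert ET (range (EQ :: 'a \<Rightarrow> 'a eidx)))" by simp
  then show "finite (UNIV :: 'a eidx set)" using UNIV_eidx by metis
qed

instance jidx :: (finite) finite
proof
  have "finite (insert JT (range (JQ :: 'a \<Rightarrow> 'a jidx) \<union> range JP))" by simp
  then show "finite (UNIV :: 'a jidx set)" using UNIV_jidx by metis
qed

definition pd :: "'p::real_normed_vector \<Rightarrow> ('p \<Rightarrow> real) \<Rightarrow> 'p \<Rightarrow> real" where
  "pd v f x = deriv (\<lambda>s. f (x + s *\<^sub>R v)) 0"

coinductive smoothf :: "('p::real_normed_vector \<Rightarrow> real) \<Rightarrow> bool" where
  "(\<forall>x. f differentiable (at x)) \<Longrightarrow> (\<forall>v. smoothf (pd v f)) \<Longrightarrow> smoothf f"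

text \<open>On a coordinate domain with points of type 'p and coordinate index type 'i,
  with b c the coordinate vector of the c-th coordinate:
  a vector field (or a 1-form) is given by its components 'i => 'p => real,
  a (1,1) tensor T by components T a c (coefficient of  d_a (x) dx^c), i.e.
  T(d_c) = sum_a T a c d_a; a covariant 2-tensor w by w a c = w(d_a, d_c).\<close>

definition bracket ::
  "('i::finite \<Rightarrow> 'p::real_normed_vector) \<Rightarrow> ('i \<Rightarrow> 'p \<Rightarrow> real) \<Rightarrow> ('i \<Rightarrow> 'p \<Rightarrow> real) \<Rightarrow> ('i \<Rightarrow> 'p \<Rightarrow> real)" where
  "bracket b X Y a x = (\<Sum>c\<in>UNIV. X c x * pd (b c) (Y a) x - Y c x * pd (b c) (X a) x)"

definition tact :: "('i::finite \<Rightarrow> 'i \<Rightarrow> 'p \<Rightarrow> real) \<Rightarrow> ('i \<Rightarrow> 'p \<Rightarrow> real) \<Rightarrow> ('i \<Rightarrow> 'p \<Rightarrow> real)" where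
  "tact T Y a x = (\<Sum>c\<in>UNIV. T a c x * Y c x)"

definition tform :: "('i::finite \<Rightarrow> 'i \<Rightarrow> 'p \<Rightarrow> real) \<Rightarrow> ('i \<Rightarrow> 'p \<Rightarrow> real) \<Rightarrow> ('i \<Rightarrow> 'p \<Rightarrow> real)" where
  "tform T \<alpha> c x = (\<Sum>a\<in>UNIV. \<alpha> a x * T a c x)"

definition coordvf :: "'i \<Rightarrow> 'i \<Rightarrow> 'p \<Rightarrow> real" where
  "coordvf c a x = (if a = c then 1 else 0)"

text \<open>Lie derivative of a (1,1) tensor: (L_X T)(Y) = [X, T Y] - T [X, Y],
  evaluated on the coordinate fields d_c.\<close>
definition lieT ::
  "('i::finite \<Rightarrow> 'p::real_normed_vector) \<Rightarrow> ('i \<Rightarrow> 'p \<Rightarrow> real) \<Rightarrow> ('i \<Rightarrow> 'i \<Rightarrow> 'p \<Rightarrow> real) \<Rightarrow> ('i \<Rightarrow> 'i \<Rightarrow> 'p \<Rightarrow> real)" where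
  "lieT b X T a c x = bracket b X (\<lambda>a'. T a' c) a x - tact T (bracket b X (coordvf c)) a x"

text \<open>Exterior derivative of a 1-form, as a covariant 2-tensor:
  d alpha (X, Y) = X(alpha Y) - Y(alpha X) - alpha [X, Y].\<close>
definition dform :: "('i::finite \<Rightarrow> 'p::real_normed_vector) \<Rightarrow> ('i \<Rightarrow> 'p \<Rightarrow> real) \<Rightarrow> ('i \<Rightarrow> 'i \<Rightarrow> 'p \<Rightarrow> real)" where
  "dform b \<alpha> a c x = pd (b a) (\<alpha> c) x - pd (b c) (\<alpha> a) x"

text \<open>R \<lrcorner>_2 w : (X, Y) |-> w(R X, Y).\<close>
definition contr2 :: "('i::finite \<Rightarrow> 'i \<Rightarrow> 'p \<Rightarrow> real) \<Rightarrow> ('i \<Rightarrow> 'i \<Rightarrow> 'p \<Rightarrow> real) \<Rightarrow> ('i \<Rightarrow> 'i \<Rightarrow> 'p \<Rightarrow> real)" where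
  "contr2 T \<omega> a c x = (\<Sum>d\<in>UNIV. T d a x * \<omega> d c x)"

fun bE :: "'n::finite eidx \<Rightarrow> real \<times> (real^'n)" where
  "bE ET = (1, 0)"
| "bE (EQ i) = (0, axis i 1)"

fun bJ :: "'n::finite jidx \<Rightarrow> real \<times> (real^'n) \<times> (real^'n)" where
  "bJ JT = (1, 0, 0)"
| "bJ (JQ i) = (0, axis i 1, 0)"
| "bJ (JP i) = (0, 0, axis i 1)"

definition dtE :: "'n eidx \<Rightarrow> real \<times> (real^'n) \<Rightarrow> real" where
  "dtE a x = (if a = ET then 1 else 0)"

definition piJ :: "real \<times> (real^'n) \<times> (real^'n) \<Rightarrow> real \<times> (real^'n)" where
  "piJ z = (fst z, fst (snd z))"

definition pJ :: "real \<times> (real^'n) \<times> (real^'n) \<Rightarrow> 'n \<Rightarrow> real" where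
  "pJ z i = snd (snd z) $ i"

text \<open>Vertical lift of a 1-form: alpha^v = alpha_i d_{p_i}.\<close>
fun vlift_form :: "('n::finite eidx \<Rightarrow> real \<times> (real^'n) \<Rightarrow> real) \<Rightarrow> 'n jidx \<Rightarrow> real \<times> (real^'n) \<times> (real^'n) \<Rightarrow> real" where
  "vlift_form \<alpha> (JP i) z = \<alpha> (EQ i) (piJ z)"
| "vlift_form \<alpha> (JQ i) z = 0"
| "vlift_form \<alpha> JT z = 0"

fun clift_vec :: "('n::finite eidx \<Rightarrow> real \<times> (real^'n) \<Rightarrow> real) \<Rightarrow> 'n jidx \<Rightarrow> real \<times> (real^'n) \<times> (real^'n) \<Rightarrow> real" where
  "clift_vec X JT z = X ET (piJ z)"
| "clift_vec X (JQ i) z = X (EQ i) (piJ z)"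
| "clift_vec X (JP i) z = - (\<Sum>j\<in>UNIV. pJ z j * pd (bE (EQ i)) (X (EQ j)) (piJ z))"

text \<open>Complete lift of a (1,1) tensor S with S(dt) = 0 (coordinate formula).
  First index: upper (vector) index, second: lower (form) index.\<close>
fun clift_tens :: "('n::finite eidx \<Rightarrow> 'n eidx \<Rightarrow> real \<times> (real^'n) \<Rightarrow> real) \<Rightarrow> 'n jidx \<Rightarrow> 'n jidx \<Rightarrow> real \<times> (real^'n) \<times> (real^'n) \<Rightarrow> real" where
  "clift_tens S (JQ i) (JQ j) z = S (EQ i) (EQ j) (piJ z)"
| "clift_tens S (JP j) (JP i) z = S (EQ i) (EQ j) (piJ z)"
| "clift_tens S (JQ i) JT z = S (EQ i) ET (piJ z)"
| "clift_tens S (JP j) (JQ k) z =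
     (\<Sum>i\<in>UNIV. pJ z i * (pd (bE (EQ k)) (S (EQ i) (EQ j)) (piJ z) - pd (bE (EQ j)) (S (EQ i) (EQ k)) (piJ z)))"
| "clift_tens S (JP k) JT z =
     (\<Sum>i\<in>UNIV. pJ z i * (pd (bE ET) (S (EQ i) (EQ k)) (piJ z) - pd (bE (EQ k)) (S (EQ i) ET) (piJ z)))"
| "clift_tens S (JQ i) (JP j) z = 0"
| "clift_tens S JT JT z = 0"
| "clift_tens S JT (JQ j) z = 0"
| "clift_tens S JT (JP j) z = 0"

text \<open>Vertical lift of a covariant 2-tensor w on E:
  w^v(alpha^v) = 0, w^v(X~) = (i_X w)^v, i.e.
  w^v = w(d_{q^i}, d_{q^j}) d_{p_j} (x) dq^i + w(d_t, d_{q^j}) d_{p_j} (x) dt.\<close>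
fun vlift_cov2 :: "('n::finite eidx \<Rightarrow> 'n eidx \<Rightarrow> real \<times> (real^'n) \<Rightarrow> real) \<Rightarrow> 'n jidx \<Rightarrow> 'n jidx \<Rightarrow> real \<times> (real^'n) \<times> (real^'n) \<Rightarrow> real" where
  "vlift_cov2 \<omega> (JP j) (JQ i) z = \<omega> (EQ i) (EQ j) (piJ z)"
| "vlift_cov2 \<omega> (JP j) JT z = \<omega> ET (EQ j) (piJ z)"
| "vlift_cov2 \<omega> (JP j) (JP i) z = 0"
| "vlift_cov2 \<omega> (JQ j) _ z = 0"
| "vlift_cov2 \<omega> JT _ z = 0"

end

theory Submission
  imports Defs
begin


definition dif :: "('p::real_normed_vector \<Rightarrow> real) \<Rightarrow> bool" where
  "dif f \<longleftrightarrow> (\<forall>x. f differentiable (at x))"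

lemma pd_line_deriv:
  assumes "(f has_derivative f') (at (x + s *\<^sub>R v))"
  shows "((\<lambda>s. f (x + s *\<^sub>R v)) has_real_derivative f' v) (at s)"
proof -
  have l: "bounded_linear f'" using assms has_derivative_bounded_linear by blast
  have "((\<lambda>s. x + s *\<^sub>R v) has_derivative (\<lambda>t. t *\<^sub>R v)) (at s)"
    by (auto intro!: derivative_eq_intros)
  from has_derivative_compose[OF this assms]
  have "((\<lambda>s. f (x + s *\<^sub>R v)) has_derivative (\<lambda>t. f' (t *\<^sub>R v))) (at s)" by (simp add: o_def)
  moreover have "(\<lambda>t. f' (t *\<^sub>R v)) = (\<lambda>t. t * f' v)"
    using linear_scale[OF bounded_linear.linear[OF l]] by auto
  ultimately show ?thesis by (simp add: has_field_derivative_def mult_commute_abs)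
qed

lemma pd_eq:
  assumes "(f has_derivative f') (at y)"
  shows "pd v f y = f' v"
proof -
  have "((\<lambda>s. f (y + s *\<^sub>R v)) has_real_derivative f' v) (at 0)"
    using pd_line_deriv[of f f' y 0 v] assms by simp
  then show ?thesis unfolding pd_def by (rule DERIV_imp_deriv)
qed

lemma pd_works:
  assumes "f differentiable (at y)"
  shows "pd v f y = frechet_derivative f (at y) v"
  using assms frechet_derivative_works pd_eq by blast

lemma pd_line_deriv2:
  assumes "f differentiable (at (x + s *\<^sub>R v))"
  shows "((\<lambda>s. f (x + s *\<^sub>R v)) has_real_derivative pd v f (x + s *\<^sub>R v)) (at s)"
  using assms pd_line_deriv pd_works frechet_derivative_works by metis

lemma pd_const[simp]: "pd v (\<lambda>x. c) y = 0"
  unfolding pd_def by simp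

lemma pd_zero_dir[simp]: "pd 0 f y = 0"
  unfolding pd_def by simp

lemma pd_add:
  assumes "f differentiable (at y)" "g differentiable (at y)"
  shows "pd v (\<lambda>x. f x + g x) y = pd v f y + pd v g y"
proof -
  have f: "(f has_derivative frechet_derivative f (at y)) (at y)"
   and g: "(g has_derivative frechet_derivative g (at y)) (at y)"
    using assms frechet_derivative_works by blast+
  show ?thesis using pd_eq[OF has_derivative_add[OF f g]] pd_eq[OF f] pd_eq[OF g] by simp
qed

lemma pd_diff:
  assumes "f differentiable (at y)" "g differentiable (at y)"
  shows "pd v (\<lambda>x. f x - g x) y = pd v f y - pd v g y"
proof -
  have f: "(f has_derivative frechet_derivative f (at y)) (at y)"
   and g: "(g has_derivative frechet_derivative g (at y)) (at y)"
    using assms frechet_derivative_works by blast+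
  show ?thesis using pd_eq[OF has_derivative_diff[OF f g]] pd_eq[OF f] pd_eq[OF g] by simp
qed

lemma pd_minus:
  assumes "f differentiable (at y)"
  shows "pd v (\<lambda>x. - f x) y = - pd v f y"
proof -
  have f: "(f has_derivative frechet_derivative f (at y)) (at y)"
    using assms frechet_derivative_works by blast+
  show ?thesis using pd_eq[OF has_derivative_minus[OF f]] pd_eq[OF f] by simp
qed

lemma pd_mult:
  assumes "f differentiable (at y)" "g differentiable (at y)"
  shows "pd v (\<lambda>x. f x * g x) y = f y * pd v g y + pd v f y * g y"
proof -
  have f: "(f has_derivative frechet_derivative f (at y)) (at y)"
   and g: "(g has_derivative frechet_derivative g (at y)) (at y)"
    using assms frechet_derivative_works by blast+
  show ?thesis using pd_eq[OF has_derivative_mult[OF f g]] pd_eq[OF f] pd_eq[OF g] by simp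
qed

lemma pd_sum:
  assumes "\<And>i. i \<in> A \<Longrightarrow> f i differentiable (at y)"
  shows "pd v (\<lambda>x. \<Sum>i\<in>A. f i x) y = (\<Sum>i\<in>A. pd v (f i) y)"
proof -
  have "\<And>i. i \<in> A \<Longrightarrow> (f i has_derivative frechet_derivative (f i) (at y)) (at y)"
    using assms frechet_derivative_works by blast
  from has_derivative_sum[of A, OF this]
  have "pd v (\<lambda>x. \<Sum>i\<in>A. f i x) y = (\<Sum>i\<in>A. frechet_derivative (f i) (at y) v)"
    by (rule pd_eq)
  also have "\<dots> = (\<Sum>i\<in>A. pd v (f i) y)"
    by (auto intro!: sum.cong simp: pd_works assms)
  finally show ?thesis .
qed

lemma schwarz_lim:
  fixes f :: "'p::real_normed_vector \<Rightarrow> real"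
  assumes df: "\<And>y. f differentiable (at y)" and dP: "(pd u f) differentiable (at x)"
  shows "((\<lambda>h. (f ((x + h *\<^sub>R v) + h *\<^sub>R u) - f (x + h *\<^sub>R u) - f (x + h *\<^sub>R v) + f x) / h^2)
          \<longlongrightarrow> pd v (pd u f) x) (at_right 0)"
proof -
  define P where "P = pd u f"
  obtain D where D: "(P has_derivative D) (at x)" using dP P_def differentiable_def by blast
  have lD: "linear D" using D has_derivative_linear by blast
  have pdv: "pd v P x = D v" using D pd_eq by blast
  define K where "K = norm u + norm v + 1"
  have K: "K > 0" unfolding K_def by (smt (verit) norm_ge_zero)
  show ?thesis unfolding tendsto_iff P_def[symmetric] pdv
  proof (intro allI impI)
    fix e :: real assume e: "e > 0"
    define e' where "e' = e / (4 * K)"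
    have e': "e' > 0" using e K unfolding e'_def by auto
    obtain d where d: "d > 0" and dd: "\<And>y. norm (y - x) < d \<Longrightarrow> norm (P y - P x - D (y - x)) \<le> e' * norm (y - x)"
      using D e' unfolding has_derivative_at_alt by blast
    define d' where "d' = d / K"
    have d': "d' > 0" using d K unfolding d'_def by auto
    have "\<forall>h\<in>{0<..<d'}. dist ((f ((x + h *\<^sub>R v) + h *\<^sub>R u) - f (x + h *\<^sub>R u) - f (x + h *\<^sub>R v) + f x) / h^2) (D v) < e"
    proof
      fix h assume h: "h \<in> {0<..<d'}"
      then have h0: "0 < h" and hd: "h < d'" by auto
      define g where "g s = f ((x + h *\<^sub>R v) + s *\<^sub>R u) - f (x + s *\<^sub>R u)" for s
      have gd: "(g has_real_derivative (P ((x + h *\<^sub>R v) + s *\<^sub>R u) - P (x + s *\<^sub>R u))) (at s)" for s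
        unfolding g_def P_def by (intro DERIV_diff pd_line_deriv2 df)
      have "continuous_on {0..h} g"
        using gd by (meson DERIV_isCont continuous_at_imp_continuous_on)
      then obtain l z where z: "0 < z" "z < h" "DERIV g z :> l" "g h - g 0 = (h - 0) * l"
        using MVT[OF h0, of g] gd real_differentiable_def by blast
      have lz: "l = P ((x + h *\<^sub>R v) + z *\<^sub>R u) - P (x + z *\<^sub>R u)"
        using DERIV_unique[OF z(3) gd] .
      have quot: "(f ((x + h *\<^sub>R v) + h *\<^sub>R u) - f (x + h *\<^sub>R u) - f (x + h *\<^sub>R v) + f x) / h^2 = l / h"
        using z(4) h0 unfolding g_def by (simp add: power2_eq_square field_simps)
      define y1 where "y1 = h *\<^sub>R v + z *\<^sub>R u"
      define y2 where "y2 = z *\<^sub>R u"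
      have n1: "norm y1 \<le> h * K"
      proof -
        have "norm y1 \<le> h * norm v + z * norm u" unfolding y1_def
          using norm_triangle_ineq[of "h *\<^sub>R v" "z *\<^sub>R u"] h0 z by simp
        also have "\<dots> \<le> h * norm v + h * norm u" using z by (simp add: mult_right_mono)
        also have "\<dots> \<le> h * K" unfolding K_def using h0 by (simp add: algebra_simps)
        finally show ?thesis .
      qed
      have n2: "norm y2 \<le> h * K"
      proof -
        have "norm y2 = z * norm u" unfolding y2_def using z by simp
        also have "\<dots> \<le> h * norm u" using z by (simp add: mult_right_mono)
        also have "\<dots> \<le> h * K" unfolding K_def using h0 by (simp add: algebra_simps)
        finally show ?thesis .
      qed
      have hK: "h * K < d" using hd K unfolding d'_def by (simp add: field_simps)
      have b1: "norm (P (x + y1) - P x - D y1) \<le> e' * norm y1"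
        using dd[of "x + y1"] n1 hK by simp
      have b2: "norm (P (x + y2) - P x - D y2) \<le> e' * norm y2"
        using dd[of "x + y2"] n2 hK by simp
      have Dlin: "D y1 - D y2 = h * D v"
        unfolding y1_def y2_def using lD by (simp add: linear_add linear_scale)
      have "l - h * D v = (P (x + y1) - P x - D y1) - (P (x + y2) - P x - D y2)"
        using Dlin unfolding lz y1_def y2_def by (simp add: algebra_simps)
      then have "\<bar>l - h * D v\<bar> \<le> e' * norm y1 + e' * norm y2"
        using b1 b2 by (smt (verit) real_norm_def)
      also have "\<dots> \<le> e' * (h * K) + e' * (h * K)"
        using n1 n2 e' by (intro add_mono mult_left_mono) auto
      also have "\<dots> = h * e / 2" unfolding e'_def using K by (simp add: field_simps)
      also have "\<dots> < h * e" using h0 e K by (simp add: field_simps)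
      finally have "\<bar>l - h * D v\<bar> < h * e" .
      moreover have "l / h - D v = (l - h * D v) / h" using h0 by (simp add: field_simps)
      ultimately have "\<bar>l / h - D v\<bar> < e" using h0
        by (simp add: abs_divide divide_less_eq mult_ac)
      then show "dist ((f ((x + h *\<^sub>R v) + h *\<^sub>R u) - f (x + h *\<^sub>R u) - f (x + h *\<^sub>R v) + f x) / h^2) (D v) < e"
        using quot by (simp add: dist_real_def)
    qed
    then show "\<forall>\<^sub>F h in at_right 0. dist ((f ((x + h *\<^sub>R v) + h *\<^sub>R u) - f (x + h *\<^sub>R u) - f (x + h *\<^sub>R v) + f x) / h^2) (D v) < e"
      using eventually_at_right_real[OF d'] eventually_mono by force
  qed
qed

lemma schwarz:
  fixes f :: "'p::real_normed_vector \<Rightarrow> real"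
  assumes df: "\<And>y. f differentiable (at y)" and dPu: "(pd u f) differentiable (at x)"
    and dPv: "(pd v f) differentiable (at x)"
  shows "pd u (pd v f) x = pd v (pd u f) x"
proof -
  have A: "((\<lambda>h. (f ((x + h *\<^sub>R v) + h *\<^sub>R u) - f (x + h *\<^sub>R u) - f (x + h *\<^sub>R v) + f x) / h^2)
          \<longlongrightarrow> pd v (pd u f) x) (at_right 0)" by (rule schwarz_lim[OF df dPu])
  have B: "((\<lambda>h. (f ((x + h *\<^sub>R u) + h *\<^sub>R v) - f (x + h *\<^sub>R v) - f (x + h *\<^sub>R u) + f x) / h^2)
          \<longlongrightarrow> pd u (pd v f) x) (at_right 0)" by (rule schwarz_lim[OF df dPv])
  have eq: "\<And>h. (x + h *\<^sub>R u) + h *\<^sub>R v = (x + h *\<^sub>R v) + h *\<^sub>R u"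
    by (simp add: add_ac)
  have fe: "(\<lambda>h. (f ((x + h *\<^sub>R u) + h *\<^sub>R v) - f (x + h *\<^sub>R v) - f (x + h *\<^sub>R u) + f x) / h^2)
      = (\<lambda>h. (f ((x + h *\<^sub>R v) + h *\<^sub>R u) - f (x + h *\<^sub>R u) - f (x + h *\<^sub>R v) + f x) / h^2)"
    unfolding eq by (rule ext) (simp add: diff_diff_eq add.commute)
  from B have B': "((\<lambda>h. (f ((x + h *\<^sub>R v) + h *\<^sub>R u) - f (x + h *\<^sub>R u) - f (x + h *\<^sub>R v) + f x) / h^2)
          \<longlongrightarrow> pd u (pd v f) x) (at_right 0)" by (simp only: fe)
  have nb: "at_right (0::real) \<noteq> bot" by simp
  show ?thesis using tendsto_unique[OF nb B' A] .
qed

lemma smoothf_diff: "smoothf f \<Longrightarrow> f differentiable (at x)"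
  by (subst (asm) smoothf.simps) blast

lemma smoothf_pd: "smoothf f \<Longrightarrow> smoothf (pd v f)"
  by (subst (asm) smoothf.simps) blast

lemma schwarz_smooth:
  assumes "smoothf f"
  shows "pd u (pd v f) x = pd v (pd u f) x"
proof (rule schwarz)
  show "\<And>y. f differentiable (at y)" using assms smoothf_diff by blast
  show "pd u f differentiable (at x)" using assms smoothf_diff smoothf_pd by blast
  show "pd v f differentiable (at x)" using assms smoothf_diff smoothf_pd by blast
qed



lemma sum_eidx: "(\<Sum>a\<in>UNIV. f a) = f ET + (\<Sum>i\<in>UNIV. f (EQ (i::'n::finite)))"
proof -
  have "(\<Sum>a\<in>(UNIV::'n eidx set). f a) = (\<Sum>a\<in>insert ET (range EQ). f a)" by (simp add: UNIV_eidx)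
  also have "\<dots> = f ET + sum f (range EQ)" by (subst sum.insert) auto
  also have "sum f (range EQ) = (\<Sum>i\<in>UNIV. f (EQ i))" by (subst sum.reindex) (auto simp: inj_def)
  finally show ?thesis .
qed

lemma sum_jidx: "(\<Sum>a\<in>UNIV. f a) = f JT + (\<Sum>i\<in>UNIV. f (JQ (i::'n::finite))) + (\<Sum>i\<in>UNIV. f (JP i))"
proof -
  have "(\<Sum>a\<in>(UNIV::'n jidx set). f a) = (\<Sum>a\<in>insert JT (range JQ \<union> range JP). f a)" by (simp add: UNIV_jidx)
  also have "\<dots> = f JT + sum f (range JQ \<union> range JP)" by (subst sum.insert) auto
  also have "sum f (range JQ \<union> range JP) = sum f (range JQ) + sum f (range JP)"
    by (rule sum.union_disjoint) auto
  also have "sum f (range JQ) = (\<Sum>i\<in>UNIV. f (JQ i))" by (subst sum.reindex) (auto simp: inj_def)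
  also have "sum f (range JP) = (\<Sum>i\<in>UNIV. f (JP i))" by (subst sum.reindex) (auto simp: inj_def)
  finally show ?thesis by (simp add: add.assoc)
qed

lemma piJ_lin: "piJ (z + s *\<^sub>R w) = piJ z + s *\<^sub>R piJ w"
  by (simp add: piJ_def)

lemma pJ_lin: "pJ (z + s *\<^sub>R w) i = pJ z i + s * pJ w i"
  by (simp add: pJ_def)

lemma pd_piJ[simp]: "pd w (\<lambda>z. f (piJ z)) z = pd (piJ w) f (piJ z)"
  unfolding pd_def by (simp add: piJ_lin)

lemma pd_pJ[simp]: "pd w (\<lambda>z. pJ z i) z = pJ w i"
  unfolding pd_def pJ_lin
  by (rule DERIV_imp_deriv) (auto intro!: derivative_eq_intros)

lemma piJ_hd: "(piJ has_derivative piJ) (at z)"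
  unfolding piJ_def by (auto intro!: derivative_eq_intros)

lemma dif_piJ[simp]: "f differentiable (at (piJ z)) \<Longrightarrow> (\<lambda>z. f (piJ z)) differentiable (at z)"
  using differentiable_compose[of f piJ z UNIV] piJ_hd differentiable_def by blast

lemma dif_pJ[simp]: "(\<lambda>z. pJ z i) differentiable (at z)"
  unfolding pJ_def differentiable_def
  by (rule exI, rule bounded_linear_imp_has_derivative)
     (intro bounded_linear_compose[OF bounded_linear_vec_nth] bounded_linear_compose[OF bounded_linear_snd] bounded_linear_snd)

lemma piJ_bJ[simp]: "piJ (bJ JT) = bE ET" "piJ (bJ (JQ i)) = bE (EQ i)" "piJ (bJ (JP i)) = 0"
  by (simp_all add: piJ_def zero_prod_def)

lemma pJ_bJ[simp]: "pJ (bJ JT) j = 0" "pJ (bJ (JQ i)) j = 0" "pJ (bJ (JP i)) j = (if j = i then 1 else 0)"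
  by (simp_all add: pJ_def axis_def)

lemma smooth_dif[simp]: "smoothf f \<Longrightarrow> f differentiable (at x)"
  by (rule smoothf_diff)

lemmas smooth_pd[simp] = smoothf_pd

lemma if10_mult: "(if P then 1 else 0) * (y::real) = (if P then y else 0)" by simp

lemma lieT_formula: "lieT b X T a c x = (\<Sum>d\<in>UNIV. X d x * pd (b d) (T a c) x)
   - (\<Sum>d\<in>UNIV. T d c x * pd (b d) (X a) x) + (\<Sum>d\<in>UNIV. T a d x * pd (b c) (X d) x)"
  unfolding lieT_def bracket_def tact_def coordvf_def
  by (simp add: sum_subtractf sum_distrib_left if10_mult sum_negf)

lemma ct_eta:
  "clift_tens S (JQ i) (JQ j) = (\<lambda>z. S (EQ i) (EQ j) (piJ z))"
  "clift_tens S (JP j) (JP i) = (\<lambda>z. S (EQ i) (EQ j) (piJ z))"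
  "clift_tens S (JQ i) JT = (\<lambda>z. S (EQ i) ET (piJ z))"
  "clift_tens S (JP j) (JQ k) = (\<lambda>z.
     (\<Sum>i\<in>UNIV. pJ z i * (pd (bE (EQ k)) (S (EQ i) (EQ j)) (piJ z) - pd (bE (EQ j)) (S (EQ i) (EQ k)) (piJ z))))"
  "clift_tens S (JP k) JT = (\<lambda>z.
     (\<Sum>i\<in>UNIV. pJ z i * (pd (bE ET) (S (EQ i) (EQ k)) (piJ z) - pd (bE (EQ k)) (S (EQ i) ET) (piJ z))))"
  "clift_tens S (JQ i) (JP j) = (\<lambda>z. 0)"
  "clift_tens S JT JT = (\<lambda>z. 0)"
  "clift_tens S JT (JQ j) = (\<lambda>z. 0)"
  "clift_tens S JT (JP j) = (\<lambda>z. 0)"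
  by (rule ext, simp)+

lemma vf_eta:
  "vlift_form \<alpha> (JP i) = (\<lambda>z. \<alpha> (EQ i) (piJ z))"
  "vlift_form \<alpha> (JQ i) = (\<lambda>z. 0)"
  "vlift_form \<alpha> JT = (\<lambda>z. 0)"
  by (rule ext, simp)+

lemma tf_eta: "tform T \<alpha> c = (\<lambda>x. \<Sum>a\<in>UNIV. \<alpha> a x * T a c x)"
  by (rule ext) (simp add: tform_def)

lemma id2:
  fixes R :: "'n::finite eidx \<Rightarrow> 'n eidx \<Rightarrow> real \<times> (real^'n) \<Rightarrow> real"
  assumes R_smooth: "\<forall>a b. smoothf (R a b)"
    and R0: "\<And>c x. R ET c x = 0"
    and al: "\<forall>a. smoothf (\<alpha> a)"
  shows "lieT bJ (vlift_form \<alpha>) (clift_tens R) A C z =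
           vlift_cov2 (\<lambda>a c x. - contr2 R (dform bE \<alpha>) a c x + dform bE (tform R \<alpha>) a c x) A C z"
    apply (cases A; cases C)
    apply (simp_all add: lieT_formula sum_jidx ct_eta vf_eta R_smooth al pd_sum pd_mult pd_diff pd_add
       contr2_def dform_def tf_eta sum_eidx R0 if10_mult del: bJ.simps bE.simps)
    apply (simp_all add: sum_subtractf sum.distrib algebra_simps)
    done

lemma cv_eta:
  "clift_vec X JT = (\<lambda>z. X ET (piJ z))"
  "clift_vec X (JQ i) = (\<lambda>z. X (EQ i) (piJ z))"
  "clift_vec X (JP i) = (\<lambda>z. - (\<Sum>j\<in>UNIV. pJ z j * pd (bE (EQ i)) (X (EQ j)) (piJ z)))"
  by (rule ext, simp)+

lemma lieT_eta: "lieT b X T a c = (\<lambda>x. (\<Sum>d\<in>UNIV. X d x * pd (b d) (T a c) x)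
   - (\<Sum>d\<in>UNIV. T d c x * pd (b d) (X a) x) + (\<Sum>d\<in>UNIV. T a d x * pd (b c) (X d) x))"
  by (rule ext) (rule lieT_formula)

lemma pl1: "(\<Sum>i\<in>A. f i * (\<Sum>j\<in>B. pJ z j * g i j)) = (\<Sum>j\<in>B. pJ z j * (\<Sum>i\<in>A. f i * g i j))"
  by (simp add: sum_distrib_left mult.left_commute sum.swap[of _ A B])

lemma pl4: "(\<Sum>i\<in>A. \<Sum>j\<in>B. pJ z j * g i j) = (\<Sum>j\<in>B. pJ z j * (\<Sum>i\<in>A. g i j))"
  by (simp add: sum_distrib_left sum.swap[of _ A B])

lemma pl2: "(\<Sum>j\<in>B. pJ z j * g j) * (c::real) = (\<Sum>j\<in>B. pJ z j * (g j * c))"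
  by (simp add: sum_distrib_right mult.assoc)

lemma pl3: "(c::real) * (\<Sum>j\<in>B. pJ z j * g j) = (\<Sum>j\<in>B. pJ z j * (c * g j))"
  by (simp add: sum_distrib_left mult.left_commute)

lemma pl5: "(\<Sum>j\<in>B. pJ z j * a j) + (\<Sum>j\<in>B. pJ z j * b j) = (\<Sum>j\<in>B. pJ z j * (a j + b j))"
  by (simp add: sum.distrib distrib_left)

lemma pl6: "(\<Sum>j\<in>B. pJ z j * a j) - (\<Sum>j\<in>B. pJ z j * b j) = (\<Sum>j\<in>B. pJ z j * (a j - b j))"
  by (simp add: sum_subtractf right_diff_distrib)

lemma pl7: "- (\<Sum>j\<in>B. pJ z j * a j) = (\<Sum>j\<in>B. pJ z j * (- a j))"
  by (simp add: sum_negf)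

lemma pl8: "(\<Sum>j\<in>B. pJ z j * a j) = (\<Sum>j\<in>B. pJ z j * b j)" if "\<And>j. a j = b j"
  using that by simp

lemmas plr = pl1 pl2 pl3 pl4 pl5 pl6 pl7

lemma id1:
  fixes R :: "'n::finite eidx \<Rightarrow> 'n eidx \<Rightarrow> real \<times> (real^'n) \<Rightarrow> real"
  assumes R_smooth: "\<forall>a b. smoothf (R a b)"
    and R0: "\<And>c x. R ET c x = 0"
    and Xs: "\<forall>a. smoothf (X a)"
    and XT: "X ET = (\<lambda>x. e)"
  shows "lieT bJ (clift_vec X) (clift_tens R) A C z = clift_tens (lieT bE X R) A C z"
    apply (cases A; cases C)
    apply (simp_all add: lieT_formula sum_jidx ct_eta cv_eta R_smooth Xs pd_sum pd_mult pd_diff pd_add pd_minus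
       lieT_eta sum_eidx R0 if10_mult XT schwarz_smooth del: bJ.simps bE.simps)
    apply (simp_all only: sum.distrib sum_subtractf ring_distribs sum_negf)
    apply (simp_all only: plr)
    apply (auto intro!: pl8 simp: algebra_simps sum.distrib sum_subtractf simp del: bJ.simps bE.simps)
    done

theorem proposition4:
  fixes R :: "'n::finite eidx \<Rightarrow> 'n eidx \<Rightarrow> real \<times> (real^'n) \<Rightarrow> real"
  assumes R_smooth: "\<forall>a b. smoothf (R a b)"
    and R_dt: "tform R dtE = (\<lambda>b x. 0)"
  shows "(\<forall>X :: 'n eidx \<Rightarrow> real \<times> (real^'n) \<Rightarrow> real.
           (\<forall>a. smoothf (X a)) \<and> (X ET = (\<lambda>x. 0) \<or> X ET = (\<lambda>x. 1)) \<longrightarrow>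
           lieT bJ (clift_vec X) (clift_tens R) = clift_tens (lieT bE X R)) \<and>
         (\<forall>\<alpha> :: 'n eidx \<Rightarrow> real \<times> (real^'n) \<Rightarrow> real.
           (\<forall>a. smoothf (\<alpha> a)) \<longrightarrow>
           lieT bJ (vlift_form \<alpha>) (clift_tens R) =
           vlift_cov2 (\<lambda>a c x. - contr2 R (dform bE \<alpha>) a c x + dform bE (tform R \<alpha>) a c x))"
proof -
  have R0: "\<And>c x. R ET c x = 0"
  proof -
    fix c x
    have "tform R dtE c x = 0" using R_dt by simp
    then show "R ET c x = 0" by (simp add: tform_def dtE_def sum_eidx)
  qed
  show ?thesis
  proof (intro conjI allI impI)
    fix X :: "'n eidx \<Rightarrow> real \<times> (real^'n) \<Rightarrow> real"
    assume H: "(\<forall>a. smoothf (X a)) \<and> (X ET = (\<lambda>x. 0) \<or> X ET = (\<lambda>x. 1))"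
    then obtain e where XT: "X ET = (\<lambda>x. e)" by blast
    have Xs: "\<forall>a. smoothf (X a)" using H by blast
    show "lieT bJ (clift_vec X) (clift_tens R) = clift_tens (lieT bE X R)"
      by (intro ext) (rule id1[OF R_smooth R0 Xs XT])
  next
    fix \<alpha> :: "'n eidx \<Rightarrow> real \<times> (real^'n) \<Rightarrow> real"
    assume al: "\<forall>a. smoothf (\<alpha> a)"
    show "lieT bJ (vlift_form \<alpha>) (clift_tens R) =
           vlift_cov2 (\<lambda>a c x. - contr2 R (dform bE \<alpha>) a c x + dform bE (tform R \<alpha>) a c x)"
      by (intro ext) (rule id2[OF R_smooth R0 al])
  qed
qed

end
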